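(* Let $Q$ be a finite connected quiver, $I$ an admissible ideal of $\Bbbk Q$ satisfying the commutativity condition of loops, $A=\Bbbk Q/I$, and $B=A/J$ the loop-reduced algebra of $A$. Regard finite-dimensional $B$-modules as $A$-modules via the projection $A\to B$. Then: (1) If $M,N$ are finite-dimensional $B$-modules with $\mathrm{Hom}_B(M,N)=0$, then $\mathrm{Ext}^1_A(M,N)\cong \mathrm{Ext}^1_B(M,N)$ as $\Bbbk$-vector spaces. (2) If $M$ is a finite-dimensional $B$-module which is a brick (i.e. $\mathrm{Hom}_B(M,M)=\Bbbk$) and $M$ is not simple, then $\mathrm{Ext}^1_A(M,M)\cong \mathrm{Ext}^1_B(M,M)$ as $\Bbbk$-vector spaces.
   Context: $\Bbbk$ is an algebraically closed field; all modules are finite-dimensional left modules. Let $Q$ be a finite connected quiver, $I$ an admissible ideal of the path algebra $\Bbbk Q$ and $A=\Bbbk Q/I$. A loop is an arrow whose source and target coincide. We say $I$ satisfies the commutativity condition of loops if: (a) every path of length two consisting of a loop followed by a non-loop arrow lies in $I$; (b) every path of length two consisting of a non-loop arrow followed by a loop lies in $I$; (c) for any two loops $\gamma_1,\gamma_2$ at the same vertex, $\gamma_1\gamma_2-\gamma_2\gamma_1\in I$. In this case let $J$ be the two-sided ideal of $A$ generated by (the classes of) all loops; $B:=A/J$ is called the loop-reduced algebra of $A$, and $A$ a loop-extended algebra of $B$. The category $B$-mod is thereby a full subcategory of $A$-mod. *)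

theory Defs
  imports Main "HOL-Library.Function_Algebras" "HOL-Computational_Algebra.Polynomial"
begin

text \<open>A path is a pair (v, as): start vertex v and the list of
arrows in the order in which they are traversed (the trivial path e_v is (v, [])).\<close>

definition is_path :: "('a \<Rightarrow> 'v) \<Rightarrow> ('a \<Rightarrow> 'v) \<Rightarrow> 'v \<times> 'a list \<Rightarrow> bool" where
  "is_path src tgt p =
     ((case snd p of [] \<Rightarrow> True | a # _ \<Rightarrow> src a = fst p) \<and>
      (\<forall>i. Suc i < length (snd p) \<longrightarrow> tgt (snd p ! i) = src (snd p ! Suc i)))"

definition path_end :: "('a \<Rightarrow> 'v) \<Rightarrow> 'v \<times> 'a list \<Rightarrow> 'v" where
  "path_end tgt p = (if snd p = [] then fst p else tgt (last (snd p)))"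

definition quiver_connected :: "('a \<Rightarrow> 'v) \<Rightarrow> ('a \<Rightarrow> 'v) \<Rightarrow> bool" where
  "quiver_connected src tgt =
     (\<forall>u w. (u, w) \<in> ({(src a, tgt a) | a. True} \<union> {(tgt a, src a) | a. True})\<^sup>*)"

definition path_alg :: "('a \<Rightarrow> 'v) \<Rightarrow> ('a \<Rightarrow> 'v) \<Rightarrow> (('v \<times> 'a list) \<Rightarrow> 'k::field) set" where
  "path_alg src tgt = {f. finite {p. f p \<noteq> 0} \<and> (\<forall>p. f p \<noteq> 0 \<longrightarrow> is_path src tgt p)}"

text \<open>Product in kQ (concatenation of paths, f-part traversed first).\<close>
definition pmult :: "('a \<Rightarrow> 'v) \<Rightarrow> ('a \<Rightarrow> 'v) \<Rightarrow> (('v \<times> 'a list) \<Rightarrow> 'k::field)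
      \<Rightarrow> (('v \<times> 'a list) \<Rightarrow> 'k) \<Rightarrow> (('v \<times> 'a list) \<Rightarrow> 'k)" where
  "pmult src tgt f g = (\<lambda>p. if is_path src tgt p then
       (\<Sum>i\<le>length (snd p). f (fst p, take i (snd p)) *
           g (path_end tgt (fst p, take i (snd p)), drop i (snd p))) else 0)"

definition path_delta :: "'v \<times> 'a list \<Rightarrow> ('v \<times> 'a list) \<Rightarrow> 'k::field" where
  "path_delta p = (\<lambda>q. if q = p then 1 else 0)"

definition is_ideal :: "('a \<Rightarrow> 'v) \<Rightarrow> ('a \<Rightarrow> 'v) \<Rightarrow> (('v \<times> 'a list) \<Rightarrow> 'k::field) set \<Rightarrow> bool" where
  "is_ideal src tgt I =
     (I \<subseteq> path_alg src tgt \<and> 0 \<in> I \<and> (\<forall>f\<in>I. \<forall>g\<in>I. f + g \<in> I) \<and>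
      (\<forall>c. \<forall>f\<in>I. (\<lambda>p. c * f p) \<in> I) \<and>
      (\<forall>f\<in>I. \<forall>g\<in>path_alg src tgt. pmult src tgt f g \<in> I \<and> pmult src tgt g f \<in> I))"

text \<open>R^m = span of the paths of length at least m (R the arrow ideal).\<close>
definition arrow_ideal_pow :: "('a \<Rightarrow> 'v) \<Rightarrow> ('a \<Rightarrow> 'v) \<Rightarrow> nat \<Rightarrow> (('v \<times> 'a list) \<Rightarrow> 'k::field) set" where
  "arrow_ideal_pow src tgt m =
     {f \<in> path_alg src tgt. \<forall>p. f p \<noteq> 0 \<longrightarrow> m \<le> length (snd p)}"

definition admissible :: "('a \<Rightarrow> 'v) \<Rightarrow> ('a \<Rightarrow> 'v) \<Rightarrow> (('v \<times> 'a list) \<Rightarrow> 'k::field) set \<Rightarrow> bool" where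
  "admissible src tgt I =
     (is_ideal src tgt I \<and> I \<subseteq> arrow_ideal_pow src tgt 2 \<and>
      (\<exists>m\<ge>2. arrow_ideal_pow src tgt m \<subseteq> I))"

definition is_loop :: "('a \<Rightarrow> 'v) \<Rightarrow> ('a \<Rightarrow> 'v) \<Rightarrow> 'a \<Rightarrow> bool" where
  "is_loop src tgt a = (src a = tgt a)"

definition comm_loops :: "('a \<Rightarrow> 'v) \<Rightarrow> ('a \<Rightarrow> 'v) \<Rightarrow> (('v \<times> 'a list) \<Rightarrow> 'k::field) set \<Rightarrow> bool" where
  "comm_loops src tgt I =
     ((\<forall>g a. is_loop src tgt g \<and> \<not> is_loop src tgt a \<and> tgt g = src a
          \<longrightarrow> path_delta (src g, [g, a]) \<in> I) \<and>
      (\<forall>a g. \<not> is_loop src tgt a \<and> is_loop src tgt g \<and> tgt a = src g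
          \<longrightarrow> path_delta (src a, [a, g]) \<in> I) \<and>
      (\<forall>g1 g2. is_loop src tgt g1 \<and> is_loop src tgt g2 \<and> src g1 = src g2
          \<longrightarrow> path_delta (src g1, [g1, g2]) - path_delta (src g1, [g2, g1]) \<in> I))"

text \<open>The ideal of kQ generated by the loops: span of paths containing a loop.
 Its image in A = kQ/I is J, so B = A/J = kQ/(I + loop_span).\<close>
definition loop_span :: "('a \<Rightarrow> 'v) \<Rightarrow> ('a \<Rightarrow> 'v) \<Rightarrow> (('v \<times> 'a list) \<Rightarrow> 'k::field) set" where
  "loop_span src tgt =
     {f \<in> path_alg src tgt. \<forall>p. f p \<noteq> 0 \<longrightarrow> (\<exists>a\<in>set (snd p). is_loop src tgt a)}"

definition loop_reduced_ideal :: "('a \<Rightarrow> 'v) \<Rightarrow> ('a \<Rightarrow> 'v) \<Rightarrow> (('v \<times> 'a list) \<Rightarrow> 'k::field) set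
     \<Rightarrow> (('v \<times> 'a list) \<Rightarrow> 'k) set" where
  "loop_reduced_ideal src tgt I = {f + g | f g. f \<in> I \<and> g \<in> loop_span src tgt}"

text \<open>A finite-dimensional kQ-module is a representation: a dimension d v at each vertex
 (the space k^(d v)) and a matrix m a :: nat => nat => 'k of size d (tgt a) x d (src a) for each arrow
 (only entries within range are relevant).\<close>

definition mmul :: "nat \<Rightarrow> (nat \<Rightarrow> nat \<Rightarrow> 'k::field) \<Rightarrow> (nat \<Rightarrow> nat \<Rightarrow> 'k) \<Rightarrow> nat \<Rightarrow> nat \<Rightarrow> 'k" where
  "mmul n X Y = (\<lambda>i j. \<Sum>l<n. X i l * Y l j)"

definition idm :: "nat \<Rightarrow> nat \<Rightarrow> 'k::field" where
  "idm = (\<lambda>i j. if i = j then 1 else 0)"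

text \<open>The linear map of a path (traversed left to right).\<close>
fun eval_path :: "('a \<Rightarrow> 'v) \<Rightarrow> ('v \<Rightarrow> nat) \<Rightarrow> ('a \<Rightarrow> nat \<Rightarrow> nat \<Rightarrow> 'k::field)
     \<Rightarrow> 'a list \<Rightarrow> nat \<Rightarrow> nat \<Rightarrow> 'k" where
  "eval_path tgt d m [] = idm"
| "eval_path tgt d m (a # as) = mmul (d (tgt a)) (eval_path tgt d m as) (m a)"

definition annihilates :: "('a \<Rightarrow> 'v) \<Rightarrow> ('a \<Rightarrow> 'v) \<Rightarrow> ('v \<Rightarrow> nat) \<Rightarrow> ('a \<Rightarrow> nat \<Rightarrow> nat \<Rightarrow> 'k::field)
     \<Rightarrow> (('v \<times> 'a list) \<Rightarrow> 'k) \<Rightarrow> bool" where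
  "annihilates src tgt d m f =
     (\<forall>u w. \<forall>i<d w. \<forall>j<d u.
        (\<Sum>p\<in>{p. f p \<noteq> 0 \<and> fst p = u \<and> path_end tgt p = w}.
            f p * eval_path tgt d m (snd p) i j) = 0)"

definition is_module :: "('a \<Rightarrow> 'v) \<Rightarrow> ('a \<Rightarrow> 'v) \<Rightarrow> (('v \<times> 'a list) \<Rightarrow> 'k::field) set
     \<Rightarrow> ('v \<Rightarrow> nat) \<Rightarrow> ('a \<Rightarrow> nat \<Rightarrow> nat \<Rightarrow> 'k) \<Rightarrow> bool" where
  "is_module src tgt K d m = (\<forall>f\<in>K. annihilates src tgt d m f)"

text \<open>Module homomorphisms M -> N (families of matrices f v of size dN v x dM v).\<close>
definition hom_set :: "('a \<Rightarrow> 'v) \<Rightarrow> ('a \<Rightarrow> 'v) \<Rightarrow> ('v \<Rightarrow> nat) \<Rightarrow> ('a \<Rightarrow> nat \<Rightarrow> nat \<Rightarrow> 'k::field)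
     \<Rightarrow> ('v \<Rightarrow> nat) \<Rightarrow> ('a \<Rightarrow> nat \<Rightarrow> nat \<Rightarrow> 'k) \<Rightarrow> ('v \<Rightarrow> nat \<Rightarrow> nat \<Rightarrow> 'k) set" where
  "hom_set src tgt dM mM dN mN =
     {f. \<forall>a. \<forall>i<dN (tgt a). \<forall>j<dM (src a).
          mmul (dN (src a)) (mN a) (f (src a)) i j = mmul (dM (tgt a)) (f (tgt a)) (mM a) i j}"

definition hom_zero :: "('a \<Rightarrow> 'v) \<Rightarrow> ('a \<Rightarrow> 'v) \<Rightarrow> ('v \<Rightarrow> nat) \<Rightarrow> ('a \<Rightarrow> nat \<Rightarrow> nat \<Rightarrow> 'k::field)
     \<Rightarrow> ('v \<Rightarrow> nat) \<Rightarrow> ('a \<Rightarrow> nat \<Rightarrow> nat \<Rightarrow> 'k) \<Rightarrow> bool" where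
  "hom_zero src tgt dM mM dN mN =
     (\<forall>f\<in>hom_set src tgt dM mM dN mN. \<forall>v. \<forall>i<dN v. \<forall>j<dM v. f v i j = 0)"

definition is_brick :: "('a \<Rightarrow> 'v) \<Rightarrow> ('a \<Rightarrow> 'v) \<Rightarrow> ('v \<Rightarrow> nat) \<Rightarrow> ('a \<Rightarrow> nat \<Rightarrow> nat \<Rightarrow> 'k::field) \<Rightarrow> bool" where
  "is_brick src tgt d m =
     ((\<exists>v. 0 < d v) \<and>
      (\<forall>f\<in>hom_set src tgt d m d m. \<exists>c. \<forall>v. \<forall>i<d v. \<forall>j<d v. f v i j = c * idm i j))"

definition vecs :: "nat \<Rightarrow> (nat \<Rightarrow> 'k::field) set" where
  "vecs n = {x. \<forall>i\<ge>n. x i = 0}"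

definition mvmul :: "nat \<Rightarrow> nat \<Rightarrow> (nat \<Rightarrow> nat \<Rightarrow> 'k::field) \<Rightarrow> (nat \<Rightarrow> 'k) \<Rightarrow> nat \<Rightarrow> 'k" where
  "mvmul r n X x = (\<lambda>i. if i < r then (\<Sum>j<n. X i j * x j) else 0)"

definition is_subrep :: "('a \<Rightarrow> 'v) \<Rightarrow> ('a \<Rightarrow> 'v) \<Rightarrow> ('v \<Rightarrow> nat) \<Rightarrow> ('a \<Rightarrow> nat \<Rightarrow> nat \<Rightarrow> 'k::field)
     \<Rightarrow> ('v \<Rightarrow> (nat \<Rightarrow> 'k) set) \<Rightarrow> bool" where
  "is_subrep src tgt d m U =
     ((\<forall>v. U v \<subseteq> vecs (d v) \<and> 0 \<in> U v \<and> (\<forall>x\<in>U v. \<forall>y\<in>U v. x + y \<in> U v) \<and>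
          (\<forall>c. \<forall>x\<in>U v. (\<lambda>i. c * x i) \<in> U v)) \<and>
     (\<forall>a. \<forall>x\<in>U (src a). mvmul (d (tgt a)) (d (src a)) (m a) x \<in> U (tgt a)))"

definition is_simple :: "('a \<Rightarrow> 'v) \<Rightarrow> ('a \<Rightarrow> 'v) \<Rightarrow> ('v \<Rightarrow> nat) \<Rightarrow> ('a \<Rightarrow> nat \<Rightarrow> nat \<Rightarrow> 'k::field) \<Rightarrow> bool" where
  "is_simple src tgt d m =
     ((\<exists>v. 0 < d v) \<and>
      (\<forall>U. is_subrep src tgt d m U \<longrightarrow> (\<forall>v. U v = {0}) \<or> (\<forall>v. U v = vecs (d v))))"

text \<open>Ext^1(M,N) over kQ/K, computed from extensions 0 -> N -> E -> M -> 0: every such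
 extension is (up to equivalence) E_v = N_v (+) M_v with E_a = [[N_a, delta_a],[0, M_a]];
 Ext^1 = {delta : E is a kQ/K-module} / {coboundaries}.\<close>

definition cochains :: "('a \<Rightarrow> 'v) \<Rightarrow> ('a \<Rightarrow> 'v) \<Rightarrow> ('v \<Rightarrow> nat) \<Rightarrow> ('v \<Rightarrow> nat)
     \<Rightarrow> ('a \<Rightarrow> nat \<Rightarrow> nat \<Rightarrow> 'k::field) set" where
  "cochains src tgt dM dN =
     {\<delta>. \<forall>a i j. (dN (tgt a) \<le> i \<or> dM (src a) \<le> j) \<longrightarrow> \<delta> a i j = 0}"

definition ext_dim :: "('v \<Rightarrow> nat) \<Rightarrow> ('v \<Rightarrow> nat) \<Rightarrow> 'v \<Rightarrow> nat" where
  "ext_dim dM dN v = dN v + dM v"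

definition ext_mat :: "('a \<Rightarrow> 'v) \<Rightarrow> ('a \<Rightarrow> 'v) \<Rightarrow> ('v \<Rightarrow> nat) \<Rightarrow> ('a \<Rightarrow> nat \<Rightarrow> nat \<Rightarrow> 'k::field)
     \<Rightarrow> ('v \<Rightarrow> nat) \<Rightarrow> ('a \<Rightarrow> nat \<Rightarrow> nat \<Rightarrow> 'k) \<Rightarrow> ('a \<Rightarrow> nat \<Rightarrow> nat \<Rightarrow> 'k)
     \<Rightarrow> 'a \<Rightarrow> nat \<Rightarrow> nat \<Rightarrow> 'k" where
  "ext_mat src tgt dM mM dN mN \<delta> = (\<lambda>a i j.
      if i < dN (tgt a) then (if j < dN (src a) then mN a i j else \<delta> a i (j - dN (src a)))
      else (if j < dN (src a) then 0 else mM a (i - dN (tgt a)) (j - dN (src a))))"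

definition ext_cocycles :: "('a \<Rightarrow> 'v) \<Rightarrow> ('a \<Rightarrow> 'v) \<Rightarrow> (('v \<times> 'a list) \<Rightarrow> 'k::field) set
     \<Rightarrow> ('v \<Rightarrow> nat) \<Rightarrow> ('a \<Rightarrow> nat \<Rightarrow> nat \<Rightarrow> 'k) \<Rightarrow> ('v \<Rightarrow> nat) \<Rightarrow> ('a \<Rightarrow> nat \<Rightarrow> nat \<Rightarrow> 'k)
     \<Rightarrow> ('a \<Rightarrow> nat \<Rightarrow> nat \<Rightarrow> 'k) set" where
  "ext_cocycles src tgt K dM mM dN mN =
     {\<delta> \<in> cochains src tgt dM dN.
        is_module src tgt K (ext_dim dM dN) (ext_mat src tgt dM mM dN mN \<delta>)}"

definition ext_coboundaries :: "('a \<Rightarrow> 'v) \<Rightarrow> ('a \<Rightarrow> 'v)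
     \<Rightarrow> ('v \<Rightarrow> nat) \<Rightarrow> ('a \<Rightarrow> nat \<Rightarrow> nat \<Rightarrow> 'k::field) \<Rightarrow> ('v \<Rightarrow> nat) \<Rightarrow> ('a \<Rightarrow> nat \<Rightarrow> nat \<Rightarrow> 'k)
     \<Rightarrow> ('a \<Rightarrow> nat \<Rightarrow> nat \<Rightarrow> 'k) set" where
  "ext_coboundaries src tgt dM mM dN mN =
     {\<delta> \<in> cochains src tgt dM dN. \<exists>f :: 'v \<Rightarrow> nat \<Rightarrow> nat \<Rightarrow> 'k.
        \<forall>a. \<forall>i<dN (tgt a). \<forall>j<dM (src a).
          \<delta> a i j = mmul (dN (src a)) (mN a) (f (src a)) i j - mmul (dM (tgt a)) (f (tgt a)) (mM a) i j}"

definition cscale :: "'k::field \<Rightarrow> ('a \<Rightarrow> nat \<Rightarrow> nat \<Rightarrow> 'k) \<Rightarrow> ('a \<Rightarrow> nat \<Rightarrow> nat \<Rightarrow> 'k)" where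
  "cscale c \<delta> = (\<lambda>a i j. c * \<delta> a i j)"

definition ext1_dim :: "('a \<Rightarrow> 'v) \<Rightarrow> ('a \<Rightarrow> 'v) \<Rightarrow> (('v \<times> 'a list) \<Rightarrow> 'k::field) set
     \<Rightarrow> ('v \<Rightarrow> nat) \<Rightarrow> ('a \<Rightarrow> nat \<Rightarrow> nat \<Rightarrow> 'k) \<Rightarrow> ('v \<Rightarrow> nat) \<Rightarrow> ('a \<Rightarrow> nat \<Rightarrow> nat \<Rightarrow> 'k) \<Rightarrow> nat" where
  "ext1_dim src tgt K dM mM dN mN =
     vector_space.dim cscale (ext_cocycles src tgt K dM mM dN mN)
     - vector_space.dim cscale (ext_coboundaries src tgt dM mM dN mN)"

definition alg_closed_field :: "'k::field itself \<Rightarrow> bool" where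
  "alg_closed_field _ = (\<forall>p :: 'k poly. 0 < degree p \<longrightarrow> (\<exists>x. poly p x = 0))"

end

theory Submission imports Defs begin

lemma sum_split_nat:
  fixes F :: "nat \<Rightarrow> 'b::comm_monoid_add"
  shows "(\<Sum>l<n+m. F l) = (\<Sum>l<n. F l) + (\<Sum>l<m. F (n+l))"
  by (induction m) (simp_all add: add.assoc)

lemma mmul_idm: assumes "i < n" shows "mmul n idm X i j = X i j"
proof -
  have "mmul n idm X i j = (\<Sum>l<n. if l = i then X i j else 0)"
    unfolding mmul_def by (rule sum.cong) (auto simp: idm_def)
  also have "\<dots> = X i j" using assms by simp
  finally show ?thesis .
qed

lemma annih_delta:
  assumes "annihilates src tgt d m (path_delta p :: _ \<Rightarrow> 'k::field)"
    and "i < d (path_end tgt p)" and "j < d (fst p)"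
  shows "eval_path tgt d m (snd p) i j = 0"
proof -
  have S: "{q. (path_delta p q :: 'k) \<noteq> 0 \<and> fst q = fst p \<and> path_end tgt q = path_end tgt p} = {p}"
    by (auto simp: path_delta_def)
  from assms(1)[unfolded annihilates_def, rule_format, OF assms(2,3)]
  show ?thesis unfolding S by (simp add: path_delta_def)
qed

lemma delta_alg:
  assumes "is_path src tgt p"
  shows "(path_delta p :: _ \<Rightarrow> 'k::field) \<in> path_alg src tgt"
proof -
  have "{q. (path_delta p q :: 'k) \<noteq> 0} = {p}" by (auto simp: path_delta_def)
  then show ?thesis using assms by (auto simp: path_alg_def path_delta_def)
qed

lemma loop_zero:
  assumes "is_module src tgt (loop_reduced_ideal src tgt I) d m"
    and "0 \<in> I" and "is_loop src tgt g" and "i < d (src g)" and "j < d (src g)"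
  shows "(m g i j :: 'k::field) = 0"
proof -
  have ip: "is_path src tgt (src g, [g])" by (simp add: is_path_def)
  have "(path_delta (src g, [g]) :: _ \<Rightarrow> 'k) \<in> loop_span src tgt"
    using delta_alg[OF ip] assms(3) by (auto simp: loop_span_def path_delta_def)
  then have "(path_delta (src g, [g]) :: _ \<Rightarrow> 'k) \<in> loop_reduced_ideal src tgt I"
    unfolding loop_reduced_ideal_def using assms(2) by force
  then have "annihilates src tgt d m (path_delta (src g, [g]) :: _ \<Rightarrow> 'k)"
    using assms(1) by (auto simp: is_module_def)
  from annih_delta[OF this, of i j] assms(3-5)
  show ?thesis by (simp add: path_end_def is_loop_def mmul_idm)
qed

lemma chain_zero:
  fixes as :: "'a list" and m :: "'a \<Rightarrow> nat \<Rightarrow> nat \<Rightarrow> 'k::field"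
  assumes "\<forall>i. Suc i < length as \<longrightarrow> tgt (as!i) = src (as!Suc i)"
    and "g \<in> set as"
    and "\<forall>l j. l < d (tgt g) \<longrightarrow> j < d (src g) \<longrightarrow> m g l j = 0"
    and "j < d (src (hd as))"
  shows "eval_path tgt d m as i j = 0"
  using assms
proof (induction as arbitrary: i j)
  case Nil
  then show ?case by simp
next
  case (Cons a rest)
  show ?case
  proof (cases "g = a")
    case True
    then show ?thesis using Cons.prems by (simp add: mmul_def)
  next
    case False
    then have gr: "g \<in> set rest" using Cons.prems by simp
    then have ne: "rest \<noteq> []" by auto
    have ch: "\<forall>i. Suc i < length rest \<longrightarrow> tgt (rest!i) = src (rest!Suc i)"
      using Cons.prems(1) by (metis Suc_less_eq length_Cons nth_Cons_Suc)
    have hd: "src (hd rest) = tgt a"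
      using Cons.prems(1)[rule_format, of 0] ne by (cases rest) auto
    have "\<forall>l<d (tgt a). eval_path tgt d m rest i l = 0"
      using Cons.IH[OF ch gr Cons.prems(3)] hd by simp
    then show ?thesis by (simp add: mmul_def)
  qed
qed

lemma sum_supp:
  assumes "finite T" "{p. h p \<noteq> 0 \<and> P p} \<subseteq> T" "T \<subseteq> Collect P"
  shows "(\<Sum>p\<in>{p. h p \<noteq> 0 \<and> P p}. h p * (X p :: 'k::field)) = (\<Sum>p\<in>T. h p * X p)"
  by (rule sum.mono_neutral_left) (use assms in auto)

lemma annih_add:
  fixes f l :: "('v \<times> 'a list) \<Rightarrow> 'k::field"
  assumes "f \<in> path_alg src tgt" "l \<in> path_alg src tgt"
    and "annihilates src tgt d m f" "annihilates src tgt d m l"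
  shows "annihilates src tgt d m (f + l)"
  unfolding annihilates_def
proof (intro allI impI)
  fix u w i j assume ij: "i < d w" "j < d u"
  define P where "P p = (fst p = u \<and> path_end tgt p = w)" for p :: "'v \<times> 'a list"
  define X where "X p = eval_path tgt d m (snd p) i j" for p :: "'v \<times> 'a list"
  define T where "T = {p. (f p \<noteq> 0 \<or> l p \<noteq> 0) \<and> P p}"
  have fT: "finite T"
  proof -
    have "T \<subseteq> {p. f p \<noteq> 0} \<union> {p. l p \<noteq> 0}" by (auto simp: T_def)
    moreover have "finite ({p. f p \<noteq> 0} \<union> {p. l p \<noteq> 0})"
      using assms(1,2) by (simp add: path_alg_def)
    ultimately show ?thesis by (rule finite_subset)
  qed
  have "(\<Sum>p\<in>{p. (f + l) p \<noteq> 0 \<and> P p}. (f + l) p * X p) = (\<Sum>p\<in>T. (f + l) p * X p)"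
    by (rule sum_supp[OF fT]) (auto simp: T_def)
  also have "\<dots> = (\<Sum>p\<in>T. f p * X p) + (\<Sum>p\<in>T. l p * X p)"
    by (simp add: distrib_right sum.distrib)
  also have "(\<Sum>p\<in>T. f p * X p) = (\<Sum>p\<in>{p. f p \<noteq> 0 \<and> P p}. f p * X p)"
    by (rule sum_supp[OF fT, symmetric]) (auto simp: T_def)
  also have "\<dots> = 0" using assms(3) ij unfolding annihilates_def P_def X_def by auto
  also have "(\<Sum>p\<in>T. l p * X p) = (\<Sum>p\<in>{p. l p \<noteq> 0 \<and> P p}. l p * X p)"
    by (rule sum_supp[OF fT, symmetric]) (auto simp: T_def)
  also have "\<dots> = 0" using assms(4) ij unfolding annihilates_def P_def X_def by auto
  finally show "(\<Sum>p\<in>{p. (f + l) p \<noteq> 0 \<and> fst p = u \<and> path_end tgt p = w}.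
            (f + l) p * eval_path tgt d m (snd p) i j) = 0"
    by (simp add: P_def X_def)
qed

lemma annih_loop_span:
  assumes "\<forall>g. is_loop src tgt g \<longrightarrow> (\<forall>l j. l < d (src g) \<longrightarrow> j < d (src g) \<longrightarrow> (m g l j :: 'k::field) = 0)"
    and "l \<in> loop_span src tgt"
  shows "annihilates src tgt d m l"
  unfolding annihilates_def
proof (intro allI impI)
  fix u w i j assume ij: "i < d w" "j < d u"
  have "eval_path tgt d m (snd p) i j = 0" if "l p \<noteq> 0" "fst p = u" for p
  proof -
    have ip: "is_path src tgt p" and "\<exists>g\<in>set (snd p). is_loop src tgt g"
      using that assms(2) unfolding loop_span_def path_alg_def by blast+
    then obtain g where g: "g \<in> set (snd p)" "is_loop src tgt g" by blast
    then obtain a rest where sp: "snd p = a # rest" by (cases "snd p") auto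
    have hd: "src (hd (snd p)) = fst p" using ip sp by (simp add: is_path_def)
    have c1: "\<forall>i. Suc i < length (snd p) \<longrightarrow> tgt (snd p!i) = src (snd p!Suc i)"
      using ip by (simp add: is_path_def)
    have c2: "\<forall>l j. l < d (tgt g) \<longrightarrow> j < d (src g) \<longrightarrow> m g l j = 0"
      using assms(1) g(2) unfolding is_loop_def by metis
    have c3: "j < d (src (hd (snd p)))" using hd that ij by simp
    show ?thesis by (rule chain_zero[where src=src and tgt=tgt and d=d and as="snd p" and m=m and g=g and j=j, OF c1 g(1) c2 c3])
  qed
  then show "(\<Sum>p\<in>{p. l p \<noteq> 0 \<and> fst p = u \<and> path_end tgt p = w}. l p * eval_path tgt d m (snd p) i j) = 0"
    by (intro sum.neutral) auto
qed

lemma eval2: "eval_path tgt d m [g, a] i j = mmul (d (tgt g)) (eval_path tgt d m [a]) (m g) i j"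
  by (simp only: eval_path.simps)

lemma eval1: "i < d (tgt a) \<Longrightarrow> eval_path tgt d m [a] i j = m a i j"
  by (simp add: mmul_idm)

lemma fact_A:
  fixes dM dN :: "'v \<Rightarrow> nat" and mM mN \<delta> :: "'a \<Rightarrow> nat \<Rightarrow> nat \<Rightarrow> 'k::field"
  assumes ZA: "\<delta> \<in> ext_cocycles src tgt I dM mM dN mN"
    and cl: "comm_loops src tgt I"
    and MB: "\<forall>g. is_loop src tgt g \<longrightarrow> (\<forall>l j. l < dM (src g) \<longrightarrow> j < dM (src g) \<longrightarrow> mM g l j = 0)"
    and g: "is_loop src tgt g" and a: "\<not> is_loop src tgt a" "src a = src g"
    and ij: "i < dN (tgt a)" "j < dM (src g)"
  shows "(\<Sum>l<dN (src g). mN a i l * \<delta> g l j) = 0"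
proof -
  define E where "E = ext_mat src tgt dM mM dN mN \<delta>"
  define dE where "dE = ext_dim dM dN"
  define v where "v = src g"
  have tg: "tgt g = v" using g by (simp add: is_loop_def v_def)
  have "path_delta (src g, [g, a]) \<in> I" using cl g a unfolding comm_loops_def
    by (metis is_loop_def)
  then have ann: "annihilates src tgt dE E (path_delta (v, [g, a]))"
    using ZA by (auto simp: ext_cocycles_def is_module_def E_def dE_def v_def)
  have "eval_path tgt dE E [g, a] i (dN v + j) = 0"
    using annih_delta[OF ann, of i "dN v + j"] ij
    by (simp add: path_end_def dE_def ext_dim_def v_def)
  then have "(\<Sum>l<dE v. eval_path tgt dE E [a] i l * E g l (dN v + j)) = 0"
    by (simp only: eval2 mmul_def tg)
  moreover have "(\<Sum>l<dE v. eval_path tgt dE E [a] i l * E g l (dN v + j))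
      = (\<Sum>l<dE v. E a i l * E g l (dN v + j))"
    using ij by (intro sum.cong) (simp_all add: mmul_idm dE_def ext_dim_def)
  moreover have "(\<Sum>l<dE v. E a i l * E g l (dN v + j)) =
      (\<Sum>l<dN v. E a i l * E g l (dN v + j)) + (\<Sum>l<dM v. E a i (dN v + l) * E g (dN v + l) (dN v + j))"
    by (simp add: dE_def ext_dim_def sum_split_nat)
  moreover have "(\<Sum>l<dN v. E a i l * E g l (dN v + j)) = (\<Sum>l<dN v. mN a i l * \<delta> g l j)"
    using ij a(2) tg by (intro sum.cong) (simp_all add: E_def ext_mat_def v_def)
  moreover have "(\<Sum>l<dM v. E a i (dN v + l) * E g (dN v + l) (dN v + j)) = 0"
    using ij a(2) tg MB g by (intro sum.neutral) (auto simp: E_def ext_mat_def v_def)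
  ultimately show ?thesis by (simp add: v_def)
qed

lemma fact_B:
  fixes dM dN :: "'v \<Rightarrow> nat" and mM mN \<delta> :: "'a \<Rightarrow> nat \<Rightarrow> nat \<Rightarrow> 'k::field"
  assumes ZA: "\<delta> \<in> ext_cocycles src tgt I dM mM dN mN"
    and cl: "comm_loops src tgt I"
    and NB: "\<forall>g. is_loop src tgt g \<longrightarrow> (\<forall>l j. l < dN (src g) \<longrightarrow> j < dN (src g) \<longrightarrow> mN g l j = 0)"
    and g: "is_loop src tgt g" and a: "\<not> is_loop src tgt a" "tgt a = src g"
    and ij: "i < dN (src g)" "j < dM (src a)"
  shows "(\<Sum>l<dM (src g). \<delta> g i l * mM a l j) = 0"
proof -
  define E where "E = ext_mat src tgt dM mM dN mN \<delta>"
  define dE where "dE = ext_dim dM dN"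
  define v where "v = src g"
  have tg: "tgt g = v" using g by (simp add: is_loop_def v_def)
  have "path_delta (src a, [a, g]) \<in> I" using cl g a unfolding comm_loops_def
    by (metis is_loop_def)
  then have ann: "annihilates src tgt dE E (path_delta (src a, [a, g]))"
    using ZA by (auto simp: ext_cocycles_def is_module_def E_def dE_def v_def)
  have "eval_path tgt dE E [a, g] i (dN (src a) + j) = 0"
    using annih_delta[OF ann, of i "dN (src a) + j"] ij tg
    by (simp add: path_end_def dE_def ext_dim_def v_def)
  then have "(\<Sum>l<dE v. eval_path tgt dE E [g] i l * E a l (dN (src a) + j)) = 0"
    by (simp only: eval2 mmul_def a(2) v_def[symmetric])
  moreover have "(\<Sum>l<dE v. eval_path tgt dE E [g] i l * E a l (dN (src a) + j))
      = (\<Sum>l<dE v. E g i l * E a l (dN (src a) + j))"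
    using ij tg by (intro sum.cong) (simp_all add: mmul_idm dE_def ext_dim_def v_def)
  moreover have "(\<Sum>l<dE v. E g i l * E a l (dN (src a) + j)) =
      (\<Sum>l<dN v. E g i l * E a l (dN (src a) + j)) + (\<Sum>l<dM v. E g i (dN v + l) * E a (dN v + l) (dN (src a) + j))"
    by (simp add: dE_def ext_dim_def sum_split_nat)
  moreover have "(\<Sum>l<dM v. E g i (dN v + l) * E a (dN v + l) (dN (src a) + j)) = (\<Sum>l<dM v. \<delta> g i l * mM a l j)"
    using ij a(2) tg by (intro sum.cong) (simp_all add: E_def ext_mat_def v_def)
  moreover have "(\<Sum>l<dN v. E g i l * E a l (dN (src a) + j)) = 0"
    using ij a(2) tg NB g by (intro sum.neutral) (auto simp: E_def ext_mat_def v_def)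
  ultimately show ?thesis by (simp add: v_def)
qed

lemma hom_of_loop:
  fixes dM dN :: "'v \<Rightarrow> nat" and mM mN \<delta> :: "'a \<Rightarrow> nat \<Rightarrow> nat \<Rightarrow> 'k::field"
  assumes ZA: "\<delta> \<in> ext_cocycles src tgt I dM mM dN mN"
    and cl: "comm_loops src tgt I"
    and MB: "\<forall>g. is_loop src tgt g \<longrightarrow> (\<forall>l j. l < dM (src g) \<longrightarrow> j < dM (src g) \<longrightarrow> mM g l j = 0)"
    and NB: "\<forall>g. is_loop src tgt g \<longrightarrow> (\<forall>l j. l < dN (src g) \<longrightarrow> j < dN (src g) \<longrightarrow> mN g l j = 0)"
    and g: "is_loop src tgt g"
  shows "(\<lambda>u. if u = src g then \<delta> g else (\<lambda>i j. 0)) \<in> hom_set src tgt dM mM dN mN"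
  unfolding hom_set_def mem_Collect_eq
proof (intro allI impI)
  fix a i j assume ij: "i < dN (tgt a)" "j < dM (src a)"
  define h where "h = (\<lambda>u. if u = src g then \<delta> g else (\<lambda>(i::nat) (j::nat). 0::'k))"
  have tg: "tgt g = src g" using g by (simp add: is_loop_def)
  show "mmul (dN (src a)) (mN a) (h (src a)) i j = mmul (dM (tgt a)) (h (tgt a)) (mM a) i j"
  proof (cases "is_loop src tgt a")
    case True
    then have ta: "tgt a = src a" by (simp add: is_loop_def)
    show ?thesis
    proof (cases "src a = src g")
      case True
      have "mmul (dN (src a)) (mN a) (h (src a)) i j = 0"
        unfolding mmul_def using NB \<open>is_loop src tgt a\<close> ij ta by (intro sum.neutral) auto
      moreover have "mmul (dM (tgt a)) (h (tgt a)) (mM a) i j = 0"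
        unfolding mmul_def using MB \<open>is_loop src tgt a\<close> ij ta by (intro sum.neutral) auto
      ultimately show ?thesis by simp
    next
      case False
      then show ?thesis using ta by (simp add: h_def mmul_def)
    qed
  next
    case False
    show ?thesis
    proof (cases "src a = src g")
      case True
      then have "tgt a \<noteq> src g" using False by (simp add: is_loop_def)
      moreover have "(\<Sum>l<dN (src g). mN a i l * \<delta> g l j) = 0"
        using fact_A[OF ZA cl MB g False True] ij True by simp
      ultimately show ?thesis using True by (simp add: h_def mmul_def)
    next
      case sa: False
      show ?thesis
      proof (cases "tgt a = src g")
        case True
        have "(\<Sum>l<dM (src g). \<delta> g i l * mM a l j) = 0"
          using fact_B[OF ZA cl NB g False True] ij True by simp
        then show ?thesis using True sa by (simp add: h_def mmul_def)
      next
        case False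
        then show ?thesis using sa by (simp add: h_def mmul_def)
      qed
    qed
  qed
qed

lemma ZA_ZB:
  fixes dM dN :: "'v \<Rightarrow> nat" and mM mN \<delta> :: "'a \<Rightarrow> nat \<Rightarrow> nat \<Rightarrow> 'k::field"
  assumes ZA: "\<delta> \<in> ext_cocycles src tgt I dM mM dN mN"
    and Ip: "I \<subseteq> path_alg src tgt"
    and MB: "\<forall>g. is_loop src tgt g \<longrightarrow> (\<forall>l j. l < dM (src g) \<longrightarrow> j < dM (src g) \<longrightarrow> mM g l j = 0)"
    and NB: "\<forall>g. is_loop src tgt g \<longrightarrow> (\<forall>l j. l < dN (src g) \<longrightarrow> j < dN (src g) \<longrightarrow> mN g l j = 0)"
    and D0: "\<forall>g. is_loop src tgt g \<longrightarrow> (\<forall>i j. \<delta> g i j = 0)"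
  shows "\<delta> \<in> ext_cocycles src tgt (loop_reduced_ideal src tgt I) dM mM dN mN"
proof -
  define E where "E = ext_mat src tgt dM mM dN mN \<delta>"
  define dE where "dE = ext_dim dM dN"
  have EL: "\<forall>g. is_loop src tgt g \<longrightarrow> (\<forall>l j. l < dE (src g) \<longrightarrow> j < dE (src g) \<longrightarrow> E g l j = 0)"
  proof (intro allI impI)
    fix g l j assume g: "is_loop src tgt g" and lj: "l < dE (src g)" "j < dE (src g)"
    have tg: "tgt g = src g" using g by (simp add: is_loop_def)
    show "E g l j = 0"
      using MB[rule_format, OF g, of "l - dN (src g)" "j - dN (src g)"]
        NB[rule_format, OF g, of l j] D0[rule_format, OF g] lj tg
      by (auto simp: E_def ext_mat_def dE_def ext_dim_def)
  qed
  have "is_module src tgt (loop_reduced_ideal src tgt I) dE E"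
    unfolding is_module_def
  proof
    fix h assume "h \<in> loop_reduced_ideal src tgt I"
    then obtain f l where h: "h = f + l" and f: "f \<in> I" and l: "l \<in> loop_span src tgt"
      unfolding loop_reduced_ideal_def by blast
    have "annihilates src tgt dE E f" using ZA f
      by (simp add: ext_cocycles_def is_module_def E_def dE_def)
    moreover have "annihilates src tgt dE E l" by (rule annih_loop_span[OF EL l])
    moreover have "l \<in> path_alg src tgt" using l by (simp add: loop_span_def)
    ultimately show "annihilates src tgt dE E h"
      unfolding h using f Ip annih_add by blast
  qed
  then show ?thesis using ZA by (simp add: ext_cocycles_def E_def dE_def)
qed

lemma ZB_ZA:
  assumes "0 \<in> I" "\<delta> \<in> ext_cocycles src tgt (loop_reduced_ideal src tgt I) dM mM dN mN"
  shows "\<delta> \<in> ext_cocycles src tgt I dM mM dN mN"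
proof -
  have "0 \<in> loop_span src tgt" by (simp add: loop_span_def path_alg_def)
  have "I \<subseteq> loop_reduced_ideal src tgt I"
  proof
    fix f assume "f \<in> I"
    moreover have "f = f + 0" by simp
    ultimately show "f \<in> loop_reduced_ideal src tgt I"
      unfolding loop_reduced_ideal_def using \<open>0 \<in> loop_span src tgt\<close> by blast
  qed
  then show ?thesis using assms(2) by (auto simp: ext_cocycles_def is_module_def)
qed

lemma brick_conc:
  fixes d :: "'v \<Rightarrow> nat" and m :: "'a \<Rightarrow> nat \<Rightarrow> nat \<Rightarrow> 'k::field"
  assumes br: "is_brick src tgt d m"
    and MB: "\<forall>g. is_loop src tgt g \<longrightarrow> (\<forall>l j. l < d (src g) \<longrightarrow> j < d (src g) \<longrightarrow> m g l j = 0)"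
    and z: "\<forall>u. u \<noteq> v \<longrightarrow> d u = 0"
  shows "d v = 1"
proof (rule ccontr)
  assume ne: "d v \<noteq> 1"
  have "0 < d v" using br z unfolding is_brick_def by (metis neq0_conv)
  then have two: "2 \<le> d v" using ne by linarith
  define e where "e = (\<lambda>u. if u = v then (\<lambda>i j. if i = 0 \<and> j = 0 then 1 else 0) else (\<lambda>(i::nat) (j::nat). 0::'k))"
  have "e \<in> hom_set src tgt d m d m"
    unfolding hom_set_def mem_Collect_eq
  proof (intro allI impI)
    fix a i j assume ij: "i < d (tgt a)" "j < d (src a)"
    then have sa: "src a = v" and ta: "tgt a = v" using z by (metis not_less0)+
    then have la: "is_loop src tgt a" by (simp add: is_loop_def)
    have "mmul (d (src a)) (m a) (e (src a)) i j = 0"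
      unfolding mmul_def using MB la ij sa ta by (intro sum.neutral) auto
    moreover have "mmul (d (tgt a)) (e (tgt a)) (m a) i j = 0"
      unfolding mmul_def using MB la ij sa ta by (intro sum.neutral) auto
    ultimately show "mmul (d (src a)) (m a) (e (src a)) i j = mmul (d (tgt a)) (e (tgt a)) (m a) i j"
      by simp
  qed
  then obtain c where c: "\<forall>u. \<forall>i<d u. \<forall>j<d u. e u i j = c * idm i j"
    using br unfolding is_brick_def by blast
  have cv: "\<forall>i<d v. \<forall>j<d v. e v i j = c * idm i j" using c by blast
  have "1 = c" using cv[rule_format, of 0 0] two by (simp add: e_def idm_def)
  moreover have "0 = c" using cv[rule_format, of 1 1] two by (simp add: e_def idm_def)
  ultimately show False by simp
qed

lemma conc_simple:
  fixes d :: "'v \<Rightarrow> nat" and m :: "'a \<Rightarrow> nat \<Rightarrow> nat \<Rightarrow> 'k::field"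
  assumes one: "d v = 1" and z: "\<forall>u. u \<noteq> v \<longrightarrow> d u = 0"
  shows "is_simple src tgt d m"
  unfolding is_simple_def
proof (intro conjI allI impI)
  show "\<exists>v. 0 < d v" using one by (metis zero_less_one)
next
  fix U assume U: "is_subrep src tgt d m U"
  have v0: "vecs 0 = {0 :: nat \<Rightarrow> 'k}" by (auto simp: vecs_def)
  have Uu: "U u = {0}" if "u \<noteq> v" for u
    using U z that v0 unfolding is_subrep_def by (metis subset_singletonD empty_iff)
  show "(\<forall>v. U v = {0}) \<or> (\<forall>v. U v = vecs (d v))"
  proof (cases "U v \<subseteq> {0}")
    case True
    then have "U v = {0}" using U unfolding is_subrep_def by blast
    then show ?thesis using Uu by metis
  next
    case False
    then obtain x where x: "x \<in> U v" "x \<noteq> 0" by blast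
    have xv: "x \<in> vecs 1" using U x one unfolding is_subrep_def by (metis subsetD)
    have x0: "x 0 \<noteq> 0"
    proof
      assume "x 0 = 0"
      then have "x = 0" using xv by (auto simp: vecs_def fun_eq_iff) (metis Suc_leI neq0_conv)
      then show False using x by simp
    qed
    have "U v = vecs 1"
    proof
      show "U v \<subseteq> vecs 1" using U one unfolding is_subrep_def by metis
    next
      show "vecs 1 \<subseteq> U v"
      proof
        fix y :: "nat \<Rightarrow> 'k" assume y: "y \<in> vecs 1"
        have "(\<lambda>i. (y 0 / x 0) * x i) \<in> U v" using U x unfolding is_subrep_def by blast
        moreover have "(\<lambda>i. (y 0 / x 0) * x i) = y"
        proof
          fix i show "y 0 / x 0 * x i = y i"
            using x0 xv y by (cases "i = 0") (auto simp: vecs_def)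
        qed
        ultimately show "y \<in> U v" by simp
      qed
    qed
    then have "\<forall>u. U u = vecs (d u)" using Uu z v0 one by metis
    then show ?thesis by blast
  qed
qed

lemma cochain_zero:
  assumes "\<delta> \<in> cochains src tgt dM dN" "is_loop src tgt g"
    and "\<forall>i<dN (src g). \<forall>j<dM (src g). \<delta> g i j = 0"
  shows "\<forall>i j. \<delta> g i j = 0"
proof (intro allI)
  fix i j
  have tg: "tgt g = src g" using assms(2) by (simp add: is_loop_def)
  show "\<delta> g i j = 0"
  proof (cases "i < dN (src g) \<and> j < dM (src g)")
    case True then show ?thesis using assms(3) by blast
  next
    case False then show ?thesis using assms(1) tg unfolding cochains_def
      by (simp add: not_less) (metis not_less)
  qed
qed

theorem theorem3p3:
  fixes src tgt :: "'a::finite \<Rightarrow> 'v::finite"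
    and I :: "(('v \<times> 'a list) \<Rightarrow> 'k::field) set"
  assumes "alg_closed_field TYPE('k)"
    and "quiver_connected src tgt"
    and "admissible src tgt I"
    and "comm_loops src tgt I"
  shows "(\<forall>dM mM dN mN.
            is_module src tgt (loop_reduced_ideal src tgt I) dM mM \<and>
            is_module src tgt (loop_reduced_ideal src tgt I) dN mN \<and>
            hom_zero src tgt dM mM dN mN \<longrightarrow>
            ext1_dim src tgt I dM mM dN mN =
            ext1_dim src tgt (loop_reduced_ideal src tgt I) dM mM dN mN)
       \<and> (\<forall>dM mM.
            is_module src tgt (loop_reduced_ideal src tgt I) dM mM \<and>
            is_brick src tgt dM mM \<and> \<not> is_simple src tgt dM mM \<longrightarrow>
            ext1_dim src tgt I dM mM dM mM =
            ext1_dim src tgt (loop_reduced_ideal src tgt I) dM mM dM mM)"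
proof -
  have idl: "is_ideal src tgt I" using assms(3) by (simp add: admissible_def)
  then have I0: "0 \<in> I" and Ip: "I \<subseteq> path_alg src tgt" by (simp_all add: is_ideal_def)
  note cl = assms(4)
  have LZ: "\<forall>g. is_loop src tgt g \<longrightarrow> (\<forall>l j. l < d (src g) \<longrightarrow> j < d (src g) \<longrightarrow> (m g l j :: 'k) = 0)"
    if "is_module src tgt (loop_reduced_ideal src tgt I) d m" for d m
    using loop_zero[OF that I0] by blast
  have EQ: "ext1_dim src tgt I dM mM dN mN = ext1_dim src tgt (loop_reduced_ideal src tgt I) dM mM dN mN"
    if M: "is_module src tgt (loop_reduced_ideal src tgt I) dM mM"
    and N: "is_module src tgt (loop_reduced_ideal src tgt I) dN mN"
    and D: "\<forall>\<delta>\<in>ext_cocycles src tgt I dM mM dN mN. \<forall>g. is_loop src tgt g \<longrightarrow> (\<forall>i j. \<delta> g i j = 0)"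
    for dM mM dN mN
  proof -
    have "ext_cocycles src tgt I dM mM dN mN = ext_cocycles src tgt (loop_reduced_ideal src tgt I) dM mM dN mN"
    proof
      show "ext_cocycles src tgt I dM mM dN mN \<subseteq> ext_cocycles src tgt (loop_reduced_ideal src tgt I) dM mM dN mN"
        using ZA_ZB[OF _ Ip LZ[OF M] LZ[OF N]] D by blast
      show "ext_cocycles src tgt (loop_reduced_ideal src tgt I) dM mM dN mN \<subseteq> ext_cocycles src tgt I dM mM dN mN"
        using ZB_ZA[OF I0] by blast
    qed
    then show ?thesis by (simp add: ext1_dim_def)
  qed
  show ?thesis
  proof (intro conjI allI impI)
    fix dM mM dN mN
    assume H: "is_module src tgt (loop_reduced_ideal src tgt I) dM mM \<and>
            is_module src tgt (loop_reduced_ideal src tgt I) dN mN \<and>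
            hom_zero src tgt dM mM dN mN"
    then have M: "is_module src tgt (loop_reduced_ideal src tgt I) dM mM"
      and N: "is_module src tgt (loop_reduced_ideal src tgt I) dN mN"
      and hz: "hom_zero src tgt dM mM dN mN" by simp_all
    show "ext1_dim src tgt I dM mM dN mN = ext1_dim src tgt (loop_reduced_ideal src tgt I) dM mM dN mN"
    proof (rule EQ[OF M N], rule ballI, rule allI, rule impI)
      fix \<delta> g assume ZA: "\<delta> \<in> ext_cocycles src tgt I dM mM dN mN" and g: "is_loop src tgt g"
      have h: "(\<lambda>u. if u = src g then \<delta> g else (\<lambda>i j. 0)) \<in> hom_set src tgt dM mM dN mN"
        by (rule hom_of_loop[OF ZA cl LZ[OF M] LZ[OF N] g])
      have hv: "\<forall>v. \<forall>i<dN v. \<forall>j<dM v. (\<lambda>u. if u = src g then \<delta> g else (\<lambda>i j. 0)) v i j = 0"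
        using bspec[OF hz[unfolded hom_zero_def] h] by simp
      have c1: "\<forall>i<dN (src g). \<forall>j<dM (src g). \<delta> g i j = 0"
        using hv[THEN spec[of _ "src g"]] by simp
      have c2: "\<delta> \<in> cochains src tgt dM dN" using ZA by (simp add: ext_cocycles_def)
      show "\<forall>i j. \<delta> g i j = 0" by (rule cochain_zero[OF c2 g c1])
    qed
  next
    fix dM mM
    assume H: "is_module src tgt (loop_reduced_ideal src tgt I) dM mM \<and>
            is_brick src tgt dM mM \<and> \<not> is_simple src tgt dM mM"
    then have M: "is_module src tgt (loop_reduced_ideal src tgt I) dM mM"
      and br: "is_brick src tgt dM mM" and ns: "\<not> is_simple src tgt dM mM" by simp_all
    show "ext1_dim src tgt I dM mM dM mM = ext1_dim src tgt (loop_reduced_ideal src tgt I) dM mM dM mM"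
    proof (rule EQ[OF M M], rule ballI, rule allI, rule impI)
      fix \<delta> g assume ZA: "\<delta> \<in> ext_cocycles src tgt I dM mM dM mM" and g: "is_loop src tgt g"
      define h where "h = (\<lambda>u. if u = src g then \<delta> g else (\<lambda>(i::nat) (j::nat). 0::'k))"
      have hh: "h \<in> hom_set src tgt dM mM dM mM"
        unfolding h_def by (rule hom_of_loop[OF ZA cl LZ[OF M] LZ[OF M] g])
      have "\<forall>f\<in>hom_set src tgt dM mM dM mM. \<exists>c. \<forall>v. \<forall>i<dM v. \<forall>j<dM v. f v i j = c * idm i j"
        using br by (simp add: is_brick_def)
      from bspec[OF this hh] obtain c where c: "\<forall>u. \<forall>i<dM u. \<forall>j<dM u. h u i j = c * idm i j"
        by blast
      have "c = 0"
      proof (rule ccontr)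
        assume c0: "c \<noteq> 0"
        have z: "\<forall>u. u \<noteq> src g \<longrightarrow> dM u = 0"
        proof (intro allI impI)
          fix u assume u: "u \<noteq> src g"
          show "dM u = 0"
          proof (rule ccontr)
            assume "dM u \<noteq> 0"
            then have "0 < dM u" by simp
            then have "h u 0 0 = c * idm 0 0" using c[THEN spec[of _ u]] by simp
            then show False using u c0 by (simp add: h_def idm_def)
          qed
        qed
        have "dM (src g) = 1" by (rule brick_conc[OF br LZ[OF M] z])
        then have "is_simple src tgt dM mM" by (rule conc_simple[OF _ z])
        then show False using ns by simp
      qed
      then have c1: "\<forall>i<dM (src g). \<forall>j<dM (src g). \<delta> g i j = 0"
        using c[THEN spec[of _ "src g"]] by (simp add: h_def)
      have c2: "\<delta> \<in> cochains src tgt dM dM" using ZA by (simp add: ext_cocycles_def)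
      show "\<forall>i j. \<delta> g i j = 0" by (rule cochain_zero[OF c2 g c1])
    qed
  qed
qed

end
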